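(* Let $\bar{\mathcal S}$ and $\mathcal S$ be countable sets and $n\ge 2$. Let $\mu$ be a Markov probability measure on $\bar{\mathcal S}^n$ with initial distribution $p_0$ and transition kernels $p_k(\cdot\mid\cdot)$, $1\le k\le n-1$, i.e. $\mu(\bar x)=p_0(\bar x_1)\prod_{k=1}^{n-1}p_k(\bar x_{k+1}\mid \bar x_k)$. For each $1\le \ell\le n$ and $\bar x\in\bar{\mathcal S}$ let $q_\ell(\cdot\mid\bar x)$ be a probability measure on $\mathcal S$. Let $\rho$ be the probability measure on $\mathcal S^n$ given by $$\rho(x)=\sum_{\bar x\in\bar{\mathcal S}^n}\mu(\bar x)\prod_{\ell=1}^n q_\ell(x_\ell\mid \bar x_\ell),$$ and let $X=(X_1,\dots,X_n)$ be a random vector with law $\rho$ (a hidden Markov process). For $1\le k\le n-1$ define the contraction coefficient $$\theta_k=\sup_{\bar x,\bar x'\in\bar{\mathcal S}}\big\|p_k(\cdot\mid\bar x)-p_k(\cdot\mid\bar x')\big\|_{TV}.$$ Then for all $1\le i<j\le n$, $$\bar\eta_{ij}\le \theta_i\theta_{i+1}\cdots\theta_{j-1},$$ where $\bar\eta_{ij}$ is computed for the process $X$.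
   Context: For a signed measure $\tau$ on a countable set $\mathcal X$, $\|\tau\|_{TV}=\frac12\sum_{x\in\mathcal X}|\tau(x)|$. For a random process $X=(X_1,\dots,X_n)$ on $\mathcal S^n$, $1\le i<j\le n$, $y\in\mathcal S^{i-1}$ and $w,w'\in\mathcal S$, let $\mathcal L(X_j^n\mid X_1^{i-1}=y,X_i=w)$ denote the conditional law of $(X_j,\dots,X_n)$ given $(X_1,\dots,X_{i-1})=y$ and $X_i=w$ (considered only when this conditioning event has positive probability), and define $$\eta_{ij}(y,w,w')=\big\|\mathcal L(X_j^n\mid X_1^{i-1}=y,X_i=w)-\mathcal L(X_j^n\mid X_1^{i-1}=y,X_i=w')\big\|_{TV},\qquad \bar\eta_{ij}=\sup_{y\in\mathcal S^{i-1}}\sup_{w,w'\in\mathcal S}\eta_{ij}(y,w,w'),$$ the suprema ranging over $y,w,w'$ for which both conditioning events have positive probability. *)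

theory Defs
  imports "HOL-Probability.Probability"
begin

text \<open>Sequences in S^n are lists of length n; the paper's coordinate k
  (1-based) is list index k-1.\<close>

definition tv :: "('a \<Rightarrow> real) \<Rightarrow> ('a \<Rightarrow> real) \<Rightarrow> real" where
  "tv f g = infsum (\<lambda>x. \<bar>f x - g x\<bar>) UNIV / 2"

definition markov_mu :: "'a pmf \<Rightarrow> (nat \<Rightarrow> 'a \<Rightarrow> 'a pmf) \<Rightarrow> 'a list \<Rightarrow> real" where
  "markov_mu p0 p xb =
     pmf p0 (xb ! 0) * (\<Prod>k\<in>{1..<length xb}. pmf (p k (xb ! (k - 1))) (xb ! k))"

definition hmm_rho :: "nat \<Rightarrow> 'a pmf \<Rightarrow> (nat \<Rightarrow> 'a \<Rightarrow> 'a pmf) \<Rightarrow> (nat \<Rightarrow> 'a \<Rightarrow> 'b pmf)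
    \<Rightarrow> 'b list \<Rightarrow> real" where
  "hmm_rho n p0 p q x =
     (if length x = n then
        infsum (\<lambda>xb. markov_mu p0 p xb * (\<Prod>l\<in>{1..n}. pmf (q l (xb ! (l - 1))) (x ! (l - 1))))
          {xb. length xb = n}
      else 0)"

definition cond_event_prob :: "('b list \<Rightarrow> real) \<Rightarrow> nat \<Rightarrow> nat \<Rightarrow> 'b list \<Rightarrow> 'b \<Rightarrow> real" where
  "cond_event_prob rho n i y w =
     infsum rho {x. length x = n \<and> take (i - 1) x = y \<and> x ! (i - 1) = w}"

text \<open>Conditional law L(X_j^n | X_1^{i-1} = y, X_i = w), as a mass function on lists z.\<close>
definition cond_law :: "('b list \<Rightarrow> real) \<Rightarrow> nat \<Rightarrow> nat \<Rightarrow> nat \<Rightarrow> 'b list \<Rightarrow> 'b \<Rightarrow> 'b list \<Rightarrow> real" where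
  "cond_law rho n i j y w z =
     infsum rho {x. length x = n \<and> take (i - 1) x = y \<and> x ! (i - 1) = w \<and> drop (j - 1) x = z}
     / cond_event_prob rho n i y w"

definition eta :: "('b list \<Rightarrow> real) \<Rightarrow> nat \<Rightarrow> nat \<Rightarrow> nat \<Rightarrow> 'b list \<Rightarrow> 'b \<Rightarrow> 'b \<Rightarrow> real" where
  "eta rho n i j y w w' = tv (cond_law rho n i j y w) (cond_law rho n i j y w')"

definition theta :: "(nat \<Rightarrow> 'a \<Rightarrow> 'a pmf) \<Rightarrow> nat \<Rightarrow> real" where
  "theta p k = (SUP xx\<in>(UNIV :: ('a \<times> 'a) set). tv (pmf (p k (fst xx))) (pmf (p k (snd xx))))"

end

theory Submission
  imports Defs
begin

lemma infsum_eq_nn: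
  fixes f :: "'x \<Rightarrow> real"
  assumes nn: "\<And>x. x\<in>A \<Longrightarrow> f x \<ge> 0"
    and fin: "(\<integral>\<^sup>+x. ennreal (f x) \<partial>count_space A) \<noteq> \<infinity>"
  shows "infsum f A = enn2real (\<integral>\<^sup>+x. ennreal (f x) \<partial>count_space A)"
proof -
  have "(\<integral>\<^sup>+x. ennreal (norm (f x)) \<partial>count_space A) = (\<integral>\<^sup>+x. ennreal (f x) \<partial>count_space A)"
    by (rule nn_integral_cong) (use nn in auto)
  hence "integrable (count_space A) f"
    using fin by (intro integrableI_bounded) (auto simp: top.not_eq_extremum)
  hence "infsum f A = infsetsum f A" by (simp add: infsetsum_infsum abs_summable_on_def)
  also have "\<dots> = enn2real (\<integral>\<^sup>+x. ennreal (f x) \<partial>count_space A)"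
    using fin nn by (intro infsetsum_conv_nn_integral) auto
  finally show ?thesis .
qed

lemma nn_swap:
  fixes f :: "'x \<Rightarrow> 'y \<Rightarrow> ennreal"
  assumes "countable B"
  shows "(\<integral>\<^sup>+x. \<integral>\<^sup>+y. f x y \<partial>count_space B \<partial>count_space A) =
         (\<integral>\<^sup>+y. \<integral>\<^sup>+x. f x y \<partial>count_space A \<partial>count_space B)"
  by (rule nn_integral_count_space_nn_integral[OF assms]) auto

lemma nn_swapU:
  fixes f :: "'x \<Rightarrow> 'y::countable \<Rightarrow> ennreal"
  shows "(\<integral>\<^sup>+x. \<integral>\<^sup>+y. f x y \<partial>count_space UNIV \<partial>count_space A) =
         (\<integral>\<^sup>+y. \<integral>\<^sup>+x. f x y \<partial>count_space A \<partial>count_space UNIV)"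
  by (rule nn_swap) auto

lemma nn_pmf_1: "(\<integral>\<^sup>+x. ennreal (pmf M x) \<partial>count_space UNIV) = 1"
  by (simp add: nn_integral_pmf measure_pmf.emeasure_space_1[simplified])

lemma nn_absdiff_fin:
  "(\<integral>\<^sup>+x. ennreal \<bar>pmf M x - pmf N x\<bar> \<partial>count_space UNIV) \<le> 2"
proof -
  have "(\<integral>\<^sup>+x. ennreal \<bar>pmf M x - pmf N x\<bar> \<partial>count_space UNIV) \<le>
        (\<integral>\<^sup>+x. ennreal (pmf M x) + ennreal (pmf N x) \<partial>count_space UNIV)"
    by (intro nn_integral_mono) (auto simp flip: ennreal_plus intro!: ennreal_leI, smt (verit) pmf_nonneg)
  also have "\<dots> = 2" by (simp add: nn_integral_add nn_pmf_1)
  finally show ?thesis .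
qed

lemma tv_pmf:
  "tv (pmf M) (pmf N) = enn2real (\<integral>\<^sup>+x. ennreal \<bar>pmf M x - pmf N x\<bar> \<partial>count_space UNIV) / 2"
proof -
  have "(\<integral>\<^sup>+x. ennreal \<bar>pmf M x - pmf N x\<bar> \<partial>count_space UNIV) \<noteq> \<infinity>"
    using nn_absdiff_fin[of M N] by (auto simp: top_unique)
  thus ?thesis unfolding tv_def by (subst infsum_eq_nn) auto
qed

lemma tv_pmf_nonneg: "0 \<le> tv (pmf M) (pmf N)"
  by (simp add: tv_pmf)

lemma tv_pmf_le1: "tv (pmf M) (pmf N) \<le> 1"
proof -
  have "enn2real (\<integral>\<^sup>+x. ennreal \<bar>pmf M x - pmf N x\<bar> \<partial>count_space UNIV) \<le> enn2real 2"
    using nn_absdiff_fin[of M N] by (intro enn2real_mono) auto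
  thus ?thesis by (simp add: tv_pmf)
qed

lemma tv_pmf_same: "tv (pmf M) (pmf M) = 0"
  by (simp add: tv_pmf)

lemma ennreal_absdiff_le:
  fixes P Q G :: ennreal
  assumes "P \<le> Q + G" "Q \<le> P + G" "P \<noteq> \<infinity>" "Q \<noteq> \<infinity>"
  shows "ennreal \<bar>enn2real P - enn2real Q\<bar> \<le> G"
proof (cases "G = \<infinity>")
  case True thus ?thesis by simp
next
  case False
  define p q g where "p = enn2real P" "q = enn2real Q" "g = enn2real G"
  have pqg: "P = ennreal p" "Q = ennreal q" "G = ennreal g" "p \<ge> 0" "q \<ge> 0" "g \<ge> 0"
    using assms False by (auto simp: p_q_g_def ennreal_enn2real_if)
  have "p \<le> q + g" "q \<le> p + g" using assms(1,2) pqg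
    by (simp_all add: ennreal_plus[symmetric] del: ennreal_plus)
  thus ?thesis using pqg by (auto intro!: ennreal_leI)
qed

lemma tv_bind_contract:
  fixes M N :: "'x::countable pmf" and K :: "'x \<Rightarrow> 'y::countable pmf"
  assumes c: "\<And>u u'. tv (pmf (K u)) (pmf (K u')) \<le> c"
  shows "tv (pmf (bind_pmf M K)) (pmf (bind_pmf N K)) \<le> c * tv (pmf M) (pmf N)"
proof -
  have c0: "0 \<le> c" using c[of undefined undefined] tv_pmf_nonneg order_trans by blast
  define fp where "fp u = max (pmf M u - pmf N u) 0" for u
  define fm where "fm u = max (pmf N u - pmf M u) 0" for u
  define mn where "mn u = min (pmf M u) (pmf N u)" for u
  have fp0: "fp u \<ge> 0" and fm0: "fm u \<ge> 0" and mn0: "mn u \<ge> 0" for u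
    by (auto simp: fp_def fm_def mn_def)
  have Me: "pmf M u = mn u + fp u" and Ne: "pmf N u = mn u + fm u"
    and De: "\<bar>pmf M u - pmf N u\<bar> = fp u + fm u" for u
    by (auto simp: fp_def fm_def mn_def)
  have IM: "(\<integral>\<^sup>+u. ennreal (mn u) \<partial>count_space UNIV) + (\<integral>\<^sup>+u. ennreal (fp u) \<partial>count_space UNIV) = 1"
  proof -
    have "(\<integral>\<^sup>+u. ennreal (mn u) \<partial>count_space UNIV) + (\<integral>\<^sup>+u. ennreal (fp u) \<partial>count_space UNIV)
        = (\<integral>\<^sup>+u. ennreal (mn u) + ennreal (fp u) \<partial>count_space UNIV)"
      by (simp add: nn_integral_add)
    also have "\<dots> = (\<integral>\<^sup>+u. ennreal (pmf M u) \<partial>count_space UNIV)"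
      by (simp add: Me mn0 fp0 ennreal_plus[symmetric] del: ennreal_plus)
    finally show ?thesis by (simp add: nn_pmf_1)
  qed
  have IN: "(\<integral>\<^sup>+u. ennreal (mn u) \<partial>count_space UNIV) + (\<integral>\<^sup>+u. ennreal (fm u) \<partial>count_space UNIV) = 1"
  proof -
    have "(\<integral>\<^sup>+u. ennreal (mn u) \<partial>count_space UNIV) + (\<integral>\<^sup>+u. ennreal (fm u) \<partial>count_space UNIV)
        = (\<integral>\<^sup>+u. ennreal (mn u) + ennreal (fm u) \<partial>count_space UNIV)"
      by (simp add: nn_integral_add)
    also have "\<dots> = (\<integral>\<^sup>+u. ennreal (pmf N u) \<partial>count_space UNIV)"
      by (simp add: Ne mn0 fm0 ennreal_plus[symmetric] del: ennreal_plus)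
    finally show ?thesis by (simp add: nn_pmf_1)
  qed
  have mnfin: "(\<integral>\<^sup>+u. ennreal (mn u) \<partial>count_space UNIV) \<noteq> \<infinity>"
    using IM by (intro notI) simp
  define T where "T = (\<integral>\<^sup>+u. ennreal (fp u) \<partial>count_space UNIV)"
  have Teq: "(\<integral>\<^sup>+u. ennreal (fm u) \<partial>count_space UNIV) = T"
  proof -
    have "(\<integral>\<^sup>+u. ennreal (mn u) \<partial>count_space UNIV) + (\<integral>\<^sup>+u. ennreal (fm u) \<partial>count_space UNIV)
      = (\<integral>\<^sup>+u. ennreal (mn u) \<partial>count_space UNIV) + T" using IM IN unfolding T_def by simp
    thus ?thesis using mnfin by (simp add: ennreal_add_left_cancel)
  qed
  have Tfin: "T \<noteq> \<infinity>" using IM unfolding T_def by (intro notI) simp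
  define t where "t = enn2real T"
  have T_t: "T = ennreal t" using Tfin by (simp add: t_def ennreal_enn2real_if)
  have t0: "t \<ge> 0" by (simp add: t_def)
  have tvMN: "tv (pmf M) (pmf N) = t"
  proof -
    have "(\<integral>\<^sup>+x. ennreal \<bar>pmf M x - pmf N x\<bar> \<partial>count_space UNIV)
        = (\<integral>\<^sup>+u. ennreal (fp u) + ennreal (fm u) \<partial>count_space UNIV)"
      by (simp add: De fp0 fm0 ennreal_plus[symmetric] del: ennreal_plus)
    also have "\<dots> = T + T" using Teq by (simp add: nn_integral_add T_def)
    also have "\<dots> = ennreal (2 * t)" using T_t t0 by (simp flip: ennreal_plus)
    finally show ?thesis using t0 by (simp add: tv_pmf)
  qed
  show ?thesis
  proof (cases "t = 0")
    case True
    hence "T = 0" using T_t by simp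
    hence "(\<integral>\<^sup>+u. ennreal (fp u) \<partial>count_space UNIV) = 0" "(\<integral>\<^sup>+u. ennreal (fm u) \<partial>count_space UNIV) = 0"
      using Teq unfolding T_def by simp_all
    hence "AE u in count_space UNIV. ennreal (fp u) = 0" "AE u in count_space UNIV. ennreal (fm u) = 0"
      by (simp_all add: nn_integral_0_iff_AE)
    hence "fp u = 0" "fm u = 0" for u using fp0 fm0 by (auto simp: AE_count_space)
    hence "pmf M u = pmf N u" for u using Me Ne by simp
    hence "M = N" by (rule pmf_eqI)
    thus ?thesis using True tvMN by (simp add: tv_pmf_same)
  next
    case False
    hence tpos: "t > 0" using t0 by simp
    define Kv where "Kv u v = pmf (K u) v" for u v
    have Kv0: "Kv u v \<ge> 0" for u v by (simp add: Kv_def)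
    define X where "X v = (\<integral>\<^sup>+u. ennreal (fp u * Kv u v) \<partial>count_space UNIV)" for v
    define Y where "Y v = (\<integral>\<^sup>+u. ennreal (fm u * Kv u v) \<partial>count_space UNIV)" for v
    define Z where "Z v = (\<integral>\<^sup>+u. ennreal (mn u * Kv u v) \<partial>count_space UNIV)" for v
    have bindeq: "ennreal (pmf (bind_pmf L K) v) = (\<integral>\<^sup>+u. ennreal (pmf L u * Kv u v) \<partial>count_space UNIV)" for L v
      by (simp add: ennreal_pmf_bind nn_integral_measure_pmf Kv_def ennreal_mult')
    have MK: "ennreal (pmf (bind_pmf M K) v) = Z v + X v" for v
    proof -
      have "ennreal (pmf (bind_pmf M K) v) = (\<integral>\<^sup>+u. ennreal (mn u * Kv u v) + ennreal (fp u * Kv u v) \<partial>count_space UNIV)"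
        unfolding bindeq by (rule nn_integral_cong) (simp add: Me distrib_right mn0 fp0 Kv0 ennreal_plus[symmetric] del: ennreal_plus)
      thus ?thesis by (simp add: nn_integral_add Z_def X_def)
    qed
    have NK: "ennreal (pmf (bind_pmf N K) v) = Z v + Y v" for v
    proof -
      have "ennreal (pmf (bind_pmf N K) v) = (\<integral>\<^sup>+u. ennreal (mn u * Kv u v) + ennreal (fm u * Kv u v) \<partial>count_space UNIV)"
        unfolding bindeq by (rule nn_integral_cong) (simp add: Ne distrib_right mn0 fm0 Kv0 ennreal_plus[symmetric] del: ennreal_plus)
      thus ?thesis by (simp add: nn_integral_add Z_def Y_def)
    qed
    have Zfin: "Z v \<noteq> \<infinity>" for v using MK[of v] by (intro notI) simp
    have Xfin: "X v \<noteq> \<infinity>" for v using MK[of v] by (intro notI) simp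
    have Yfin: "Y v \<noteq> \<infinity>" for v using NK[of v] by (intro notI) simp
    have absK: "\<bar>pmf (bind_pmf M K) v - pmf (bind_pmf N K) v\<bar> = \<bar>enn2real (X v) - enn2real (Y v)\<bar>" for v
    proof -
      have "pmf (bind_pmf M K) v = enn2real (Z v + X v)" unfolding MK[symmetric] by simp
      also have "\<dots> = enn2real (Z v) + enn2real (X v)"
        using Zfin[of v] Xfin[of v] by (simp add: enn2real_plus top.not_eq_extremum)
      finally have 1: "pmf (bind_pmf M K) v = enn2real (Z v) + enn2real (X v)" .
      have "pmf (bind_pmf N K) v = enn2real (Z v + Y v)" unfolding NK[symmetric] by simp
      also have "\<dots> = enn2real (Z v) + enn2real (Y v)"
        using Zfin[of v] Yfin[of v] by (simp add: enn2real_plus top.not_eq_extremum)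
      finally have 2: "pmf (bind_pmf N K) v = enn2real (Z v) + enn2real (Y v)" .
      show ?thesis using 1 2 by simp
    qed
    define P where "P v = (\<integral>\<^sup>+u'. \<integral>\<^sup>+u. ennreal (fp u * fm u' * Kv u v) \<partial>count_space UNIV \<partial>count_space UNIV)" for v
    define Q where "Q v = (\<integral>\<^sup>+u'. \<integral>\<^sup>+u. ennreal (fp u * fm u' * Kv u' v) \<partial>count_space UNIV \<partial>count_space UNIV)" for v
    define G where "G v = (\<integral>\<^sup>+u'. \<integral>\<^sup>+u. ennreal (fp u * fm u' * \<bar>Kv u v - Kv u' v\<bar>) \<partial>count_space UNIV \<partial>count_space UNIV)" for v
    have PX: "P v = T * X v" for v
    proof -
      have "T * X v = (\<integral>\<^sup>+u'. ennreal (fm u') * X v \<partial>count_space UNIV)"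
        using Teq by (simp add: nn_integral_multc)
      also have "\<dots> = P v" unfolding P_def X_def
        by (intro nn_integral_cong) (simp add: nn_integral_cmult[symmetric] ennreal_mult'[symmetric] fp0 fm0 Kv0 mult_ac)
      finally show ?thesis by simp
    qed
    have QY: "Q v = T * Y v" for v
    proof -
      have "T * Y v = (\<integral>\<^sup>+u. ennreal (fp u) * Y v \<partial>count_space UNIV)"
        unfolding T_def by (simp add: nn_integral_multc)
      also have "\<dots> = (\<integral>\<^sup>+u. \<integral>\<^sup>+u'. ennreal (fp u * fm u' * Kv u' v) \<partial>count_space UNIV \<partial>count_space UNIV)"
        unfolding Y_def
        by (intro nn_integral_cong) (simp add: nn_integral_cmult[symmetric] ennreal_mult'[symmetric] fp0 fm0 Kv0 mult_ac)
      also have "\<dots> = Q v" unfolding Q_def by (rule nn_swapU)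
      finally show ?thesis by simp
    qed
    have addPG: "(\<integral>\<^sup>+u'. \<integral>\<^sup>+u. ennreal (fp u * fm u' * Kv u v) + ennreal (fp u * fm u' * \<bar>Kv u v - Kv u' v\<bar>) \<partial>count_space UNIV \<partial>count_space UNIV) = P v + G v" for v
      unfolding P_def G_def by (simp add: nn_integral_add)
    have addQG: "(\<integral>\<^sup>+u'. \<integral>\<^sup>+u. ennreal (fp u * fm u' * Kv u' v) + ennreal (fp u * fm u' * \<bar>Kv u v - Kv u' v\<bar>) \<partial>count_space UNIV \<partial>count_space UNIV) = Q v + G v" for v
      unfolding Q_def G_def by (simp add: nn_integral_add)
    have PQ: "P v \<le> Q v + G v" for v
      unfolding addQG[symmetric] unfolding P_def
      by (intro nn_integral_mono) (auto simp: fp0 fm0 Kv0 ennreal_plus[symmetric] distrib_left[symmetric] mult_left_mono simp del: ennreal_plus intro!: ennreal_leI)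
    have QP: "Q v \<le> P v + G v" for v
      unfolding addPG[symmetric] unfolding Q_def
      by (intro nn_integral_mono) (auto simp: fp0 fm0 Kv0 ennreal_plus[symmetric] distrib_left[symmetric] mult_left_mono simp del: ennreal_plus intro!: ennreal_leI)
    have star: "ennreal (t * \<bar>pmf (bind_pmf M K) v - pmf (bind_pmf N K) v\<bar>) \<le> G v" for v
    proof -
      have "P v \<noteq> \<infinity>" "Q v \<noteq> \<infinity>" using PX QY Tfin Xfin Yfin by (simp_all add: ennreal_mult_eq_top_iff)
      hence "ennreal \<bar>enn2real (P v) - enn2real (Q v)\<bar> \<le> G v"
        using PQ QP by (intro ennreal_absdiff_le) auto
      moreover have "\<bar>enn2real (P v) - enn2real (Q v)\<bar> = t * \<bar>pmf (bind_pmf M K) v - pmf (bind_pmf N K) v\<bar>"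
        using PX QY absK t0 by (simp add: enn2real_mult t_def right_diff_distrib[symmetric] abs_mult)
      ultimately show ?thesis by simp
    qed
    have Kdiff: "(\<integral>\<^sup>+v. ennreal \<bar>Kv u v - Kv u' v\<bar> \<partial>count_space UNIV) \<le> ennreal (2 * c)" for u u'
    proof -
      have fin: "(\<integral>\<^sup>+v. ennreal \<bar>Kv u v - Kv u' v\<bar> \<partial>count_space UNIV) \<noteq> \<infinity>"
        using nn_absdiff_fin[of "K u" "K u'"] unfolding Kv_def by (auto simp: top_unique)
      have "(\<integral>\<^sup>+v. ennreal \<bar>Kv u v - Kv u' v\<bar> \<partial>count_space UNIV) = ennreal (2 * tv (pmf (K u)) (pmf (K u')))"
        using fin by (simp add: tv_pmf Kv_def ennreal_enn2real_if)
      also have "\<dots> \<le> ennreal (2 * c)" using c[of u u'] by (intro ennreal_leI) simp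
      finally show ?thesis .
    qed
    have "(\<integral>\<^sup>+v. G v \<partial>count_space UNIV)
        = (\<integral>\<^sup>+u'. \<integral>\<^sup>+v. \<integral>\<^sup>+u. ennreal (fp u * fm u' * \<bar>Kv u v - Kv u' v\<bar>) \<partial>count_space UNIV \<partial>count_space UNIV \<partial>count_space UNIV)"
      unfolding G_def by (rule nn_swapU)
    also have "\<dots> = (\<integral>\<^sup>+u'. \<integral>\<^sup>+u. \<integral>\<^sup>+v. ennreal (fp u * fm u' * \<bar>Kv u v - Kv u' v\<bar>) \<partial>count_space UNIV \<partial>count_space UNIV \<partial>count_space UNIV)"
      by (intro nn_integral_cong nn_swapU)
    also have "\<dots> = (\<integral>\<^sup>+u'. \<integral>\<^sup>+u. ennreal (fp u * fm u') * (\<integral>\<^sup>+v. ennreal \<bar>Kv u v - Kv u' v\<bar> \<partial>count_space UNIV) \<partial>count_space UNIV \<partial>count_space UNIV)"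
      by (intro nn_integral_cong) (simp add: nn_integral_cmult[symmetric] ennreal_mult'[symmetric] fp0 fm0)
    also have "\<dots> \<le> (\<integral>\<^sup>+u'. \<integral>\<^sup>+u. ennreal (fp u * fm u') * ennreal (2 * c) \<partial>count_space UNIV \<partial>count_space UNIV)"
      by (intro nn_integral_mono mult_left_mono Kdiff) auto
    also have "\<dots> = (\<integral>\<^sup>+u'. \<integral>\<^sup>+u. ennreal (fp u) * ennreal (fm u' * (2 * c)) \<partial>count_space UNIV \<partial>count_space UNIV)"
      by (intro nn_integral_cong) (simp add: ennreal_mult'[symmetric] fp0 fm0 c0 mult_ac)
    also have "\<dots> = (\<integral>\<^sup>+u'. T * ennreal (fm u' * (2 * c)) \<partial>count_space UNIV)"
      unfolding T_def by (simp add: nn_integral_multc)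
    also have "\<dots> = (\<integral>\<^sup>+u'. ennreal (fm u') * ennreal (t * (2 * c)) \<partial>count_space UNIV)"
      by (intro nn_integral_cong) (simp add: T_t ennreal_mult'[symmetric] fm0 c0 t0 mult_ac)
    also have "\<dots> = T * ennreal (t * (2 * c))" using Teq by (simp add: nn_integral_multc)
    also have "\<dots> = ennreal (2 * c * t * t)" using T_t t0 c0 by (simp add: ennreal_mult'[symmetric] mult_ac)
    finally have Gsum: "(\<integral>\<^sup>+v. G v \<partial>count_space UNIV) \<le> ennreal (2 * c * t * t)" .
    define tv' where "tv' = tv (pmf (bind_pmf M K)) (pmf (bind_pmf N K))"
    have finK: "(\<integral>\<^sup>+v. ennreal \<bar>pmf (bind_pmf M K) v - pmf (bind_pmf N K) v\<bar> \<partial>count_space UNIV) \<noteq> \<infinity>"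
      using nn_absdiff_fin[of "bind_pmf M K" "bind_pmf N K"] by (auto simp: top_unique)
    have "(\<integral>\<^sup>+v. ennreal (t * \<bar>pmf (bind_pmf M K) v - pmf (bind_pmf N K) v\<bar>) \<partial>count_space UNIV)
        = ennreal t * (\<integral>\<^sup>+v. ennreal \<bar>pmf (bind_pmf M K) v - pmf (bind_pmf N K) v\<bar> \<partial>count_space UNIV)"
      using t0 by (simp add: nn_integral_cmult[symmetric] ennreal_mult')
    also have "\<dots> = ennreal (t * (2 * tv'))"
      using finK t0 by (simp add: tv'_def tv_pmf ennreal_enn2real_if ennreal_mult')
    finally have "ennreal (t * (2 * tv')) \<le> ennreal (2 * c * t * t)"
      using Gsum star by (metis (no_types, lifting) nn_integral_mono order_trans)
    hence "t * (2 * tv') \<le> 2 * c * t * t" using c0 t0 by (subst (asm) ennreal_le_iff) auto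
    hence "t * (2 * tv') \<le> t * (2 * (c * t))" by (simp add: mult_ac)
    hence "tv' \<le> c * t" using tpos by (simp add: mult_le_cancel_left_pos)
    thus ?thesis using tvMN by (simp add: tv'_def)
  qed
qed

lemma tv_le_theta: "tv (pmf (p k u)) (pmf (p k u')) \<le> theta p k"
proof -
  have "bdd_above ((\<lambda>xx. tv (pmf (p k (fst xx))) (pmf (p k (snd xx)))) ` UNIV)"
    by (rule bdd_aboveI2[where M=1]) (rule tv_pmf_le1)
  from cSUP_upper[OF UNIV_I this, of "(u,u')"] show ?thesis by (simp add: theta_def)
qed

lemma theta_nonneg: "0 \<le> theta p k"
  by (rule order_trans[OF tv_pmf_nonneg tv_le_theta])

lemma e1: "(\<Prod>t<Suc m. f (k+t)) = f k * (\<Prod>t<m. f (Suc k + t) :: real)"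
  using prod.lessThan_Suc_shift[of "\<lambda>t. f (k+t)" m] by simp

lemma mult_swap_aux: "X * (a * b) = (a * X) * (b::real)" by (simp add: algebra_simps)

fun genH :: "(nat \<Rightarrow> 'a \<Rightarrow> 'a pmf) \<Rightarrow> nat \<Rightarrow> 'a \<Rightarrow> nat \<Rightarrow> 'a list pmf" where
  "genH p k u 0 = return_pmf []"
| "genH p k u (Suc m) = bind_pmf (p k u) (\<lambda>v. map_pmf (Cons v) (genH p (Suc k) v m))"

definition chainK :: "(nat \<Rightarrow> 'a \<Rightarrow> 'a pmf) \<Rightarrow> nat \<Rightarrow> nat \<Rightarrow> 'a \<Rightarrow> 'a pmf" where
  "chainK p k m u = map_pmf (\<lambda>r. last (u#r)) (genH p k u m)"

lemma chainK_0: "chainK p k 0 u = return_pmf u"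
  by (simp add: chainK_def)

lemma chainK_Suc: "chainK p k (Suc m) u = bind_pmf (p k u) (chainK p (Suc k) m)"
  unfolding chainK_def[abs_def] by (simp add: map_bind_pmf map_pmf_comp o_def)

lemma chain_contract:
  fixes M N :: "'a::countable pmf"
  shows "tv (pmf (bind_pmf M (chainK p k m))) (pmf (bind_pmf N (chainK p k m)))
     \<le> (\<Prod>t<m. theta p (k+t)) * tv (pmf M) (pmf N)"
proof (induction m arbitrary: k M N)
  case 0
  have "chainK p k 0 = return_pmf" by (rule ext) (simp add: chainK_0)
  hence e: "bind_pmf L (chainK p k 0) = L" for L :: "'a pmf" by (simp only: bind_return_pmf')
  show ?case unfolding e by simp
next
  case (Suc m)
  have eq: "bind_pmf L (chainK p k (Suc m)) = bind_pmf (bind_pmf L (p k)) (chainK p (Suc k) m)" for L :: "'a pmf"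
    by (simp add: chainK_Suc[abs_def] bind_assoc_pmf)
  have "tv (pmf (bind_pmf M (chainK p k (Suc m)))) (pmf (bind_pmf N (chainK p k (Suc m))))
      \<le> (\<Prod>t<m. theta p (Suc k + t)) * tv (pmf (bind_pmf M (p k))) (pmf (bind_pmf N (p k)))"
    unfolding eq by (rule Suc.IH)
  also have "\<dots> \<le> (\<Prod>t<m. theta p (Suc k + t)) * (theta p k * tv (pmf M) (pmf N))"
    by (intro mult_left_mono tv_bind_contract tv_le_theta prod_nonneg theta_nonneg)
  also have "\<dots> = (theta p k * (\<Prod>t<m. theta p (Suc k + t))) * tv (pmf M) (pmf N)"
    by (rule mult_swap_aux)
  also have "\<dots> = (\<Prod>t<Suc m. theta p (k+t)) * tv (pmf M) (pmf N)"
  proof -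
    have e: "(\<Prod>t<Suc m. theta p (k+t)) = theta p k * (\<Prod>t<m. theta p (Suc k + t))"
      by (rule e1)
    show ?thesis by (simp only: e)
  qed
  finally show ?case .
qed

fun hw :: "(nat \<Rightarrow> 'a \<Rightarrow> 'a pmf) \<Rightarrow> nat \<Rightarrow> 'a \<Rightarrow> 'a list \<Rightarrow> real" where
  "hw p k u [] = 1"
| "hw p k u (v#r) = pmf (p k u) v * hw p (Suc k) v r"

fun ow :: "(nat \<Rightarrow> 'a \<Rightarrow> 'b pmf) \<Rightarrow> nat \<Rightarrow> 'a list \<Rightarrow> 'b list \<Rightarrow> real" where
  "ow q l [] [] = 1"
| "ow q l (u#xs) (c#cs) = pmf (q l u) c * ow q (Suc l) xs cs"
| "ow q l [] (c#cs) = 0"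
| "ow q l (u#xs) [] = 0"

fun obsG :: "(nat \<Rightarrow> 'a \<Rightarrow> 'b pmf) \<Rightarrow> nat \<Rightarrow> 'a list \<Rightarrow> 'b list pmf" where
  "obsG q l [] = return_pmf []"
| "obsG q l (u#xs) = bind_pmf (q l u) (\<lambda>c. map_pmf (Cons c) (obsG q (Suc l) xs))"

lemma hw_nonneg: "0 \<le> hw p k u r"
  by (induction r arbitrary: k u) auto

lemma ow_nonneg: "0 \<le> ow q l xs cs"
  by (induction q l xs cs rule: ow.induct) auto

lemma ow_len: "length xs \<noteq> length cs \<Longrightarrow> ow q l xs cs = 0"
  by (induction q l xs cs rule: ow.induct) auto

lemma hw_append: "hw p k u (r1 @ r2) = hw p k u r1 * hw p (k + length r1) (last (u#r1)) r2"
  by (induction r1 arbitrary: k u) auto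

lemma ow_append: "length xs1 = length cs1 \<Longrightarrow>
   ow q l (xs1 @ xs2) (cs1 @ cs2) = ow q l xs1 cs1 * ow q (l + length xs1) xs2 cs2"
proof (induction xs1 arbitrary: l cs1)
  case Nil thus ?case by simp
next
  case (Cons u xs) thus ?case by (cases cs1) auto
qed

lemma hw_prod: "hw p k u r = (\<Prod>t<length r. pmf (p (k+t) ((u#r)!t)) (r!t))"
proof (induction r arbitrary: k u)
  case Nil thus ?case by simp
next
  case (Cons v r)
  show ?case
    using prod.lessThan_Suc_shift[of "\<lambda>t. pmf (p (k+t) ((u#v#r)!t)) ((v#r)!t)" "length r"]
    by (simp add: Cons.IH)
qed

lemma ow_prod: "length xs = length cs \<Longrightarrow> ow q l xs cs = (\<Prod>t<length xs. pmf (q (l+t) (xs!t)) (cs!t))"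
proof (induction xs arbitrary: l cs)
  case Nil thus ?case by simp
next
  case (Cons u xs)
  then obtain c cs' where cs: "cs = c # cs'" by (cases cs) auto
  show ?case
    using prod.lessThan_Suc_shift[of "\<lambda>t. pmf (q (l+t) ((u#xs)!t)) ((c#cs')!t)" "length xs"] Cons
    by (simp add: cs)
qed

lemma pmf_bind_map_inj2:
  assumes inj: "\<And>v t v' t'. g v t = g v' t' \<Longrightarrow> v = v' \<and> t = t'"
  shows "pmf (bind_pmf M (\<lambda>v. map_pmf (g v) (G v))) (g v t) = pmf M v * pmf (G v) t"
proof -
  have inj1: "inj (g x)" for x using inj by (auto simp: inj_def)
  have pt: "pmf (map_pmf (g x) (G x)) (g v t) = (if x = v then pmf (G v) t else 0)" for x
  proof (cases "x = v")
    case True thus ?thesis using pmf_map_inj'[OF inj1] by simp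
  next
    case False
    hence "g v t \<notin> g x ` set_pmf (G x)" using inj by blast
    thus ?thesis using False by (simp add: pmf_map_outside)
  qed
  have "ennreal (pmf (bind_pmf M (\<lambda>v. map_pmf (g v) (G v))) (g v t))
      = (\<integral>\<^sup>+x. ennreal (pmf M x) * ennreal (if x = v then pmf (G v) t else 0) \<partial>count_space UNIV)"
    by (simp add: ennreal_pmf_bind nn_integral_measure_pmf pt)
  also have "\<dots> = (\<integral>\<^sup>+x. ennreal (pmf M v * pmf (G v) t) * indicator {v} x \<partial>count_space UNIV)"
    by (intro nn_integral_cong) (auto simp: ennreal_mult' split: split_indicator)
  also have "\<dots> = ennreal (pmf M v * pmf (G v) t)"
    by (simp add: nn_integral_cmult_indicator)
  finally show ?thesis by (simp add: ennreal_inj)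
qed

lemma pmf_bind_map_outside:
  assumes "\<And>v t. z \<noteq> g v t"
  shows "pmf (bind_pmf M (\<lambda>v. map_pmf (g v) (G v))) z = 0"
proof -
  have "pmf (map_pmf (g x) (G x)) z = 0" for x using assms by (intro pmf_map_outside) auto
  thus ?thesis by (simp add: pmf_bind)
qed

lemma pmf_genH: "pmf (genH p k u m) r = (if length r = m then hw p k u r else 0)"
proof (induction m arbitrary: k u r)
  case 0 thus ?case by (cases r) auto
next
  case (Suc m)
  show ?case
  proof (cases r)
    case Nil thus ?thesis by (auto intro!: pmf_bind_map_outside)
  next
    case (Cons v t)
    have "pmf (genH p k u (Suc m)) (v#t) = pmf (p k u) v * pmf (genH p (Suc k) v m) t"
      by (simp, rule pmf_bind_map_inj2[where g=Cons]) simp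
    thus ?thesis using Suc.IH Cons by simp
  qed
qed

lemma pmf_obsG: "pmf (obsG q l xs) cs = ow q l xs cs"
proof (induction xs arbitrary: l cs)
  case Nil thus ?case by (cases cs) auto
next
  case (Cons u xs)
  show ?case
  proof (cases cs)
    case Nil thus ?thesis by (auto intro!: pmf_bind_map_outside)
  next
    case (Cons c t)
    have "pmf (obsG q l (u#xs)) (c#t) = pmf (q l u) c * pmf (obsG q (Suc l) xs) t"
      by (simp, rule pmf_bind_map_inj2[where g=Cons]) simp
    thus ?thesis using Cons.IH \<open>cs = c#t\<close> by simp
  qed
qed

definition HH :: "'a pmf \<Rightarrow> (nat \<Rightarrow> 'a \<Rightarrow> 'a pmf) \<Rightarrow> nat \<Rightarrow> 'a list pmf" where
  "HH p0 p n = bind_pmf p0 (\<lambda>u. map_pmf (Cons u) (genH p 1 u (n-1)))"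

definition JJ :: "'a pmf \<Rightarrow> (nat \<Rightarrow> 'a \<Rightarrow> 'a pmf) \<Rightarrow> (nat \<Rightarrow> 'a \<Rightarrow> 'b pmf) \<Rightarrow> nat \<Rightarrow> ('a list \<times> 'b list) pmf" where
  "JJ p0 p q n = bind_pmf (HH p0 p n) (\<lambda>xb. map_pmf (Pair xb) (obsG q 1 xb))"

definition RR :: "'a pmf \<Rightarrow> (nat \<Rightarrow> 'a \<Rightarrow> 'a pmf) \<Rightarrow> (nat \<Rightarrow> 'a \<Rightarrow> 'b pmf) \<Rightarrow> nat \<Rightarrow> 'b list pmf" where
  "RR p0 p q n = map_pmf snd (JJ p0 p q n)"

lemma pmf_HH:
  assumes "n \<ge> 1"
  shows "pmf (HH p0 p n) xb = (if length xb = n then pmf p0 (hd xb) * hw p 1 (hd xb) (tl xb) else 0)"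
proof (cases xb)
  case Nil thus ?thesis using assms unfolding HH_def by (auto intro!: pmf_bind_map_outside)
next
  case (Cons u r)
  have "pmf (HH p0 p n) (u#r) = pmf p0 u * pmf (genH p 1 u (n-1)) r"
    unfolding HH_def by (rule pmf_bind_map_inj2[where g=Cons]) simp
  thus ?thesis using Cons assms by (auto simp: pmf_genH)
qed

lemma pmf_JJ: "pmf (JJ p0 p q n) (xb, x) = pmf (HH p0 p n) xb * ow q 1 xb x"
proof -
  have "pmf (JJ p0 p q n) (xb, x) = pmf (HH p0 p n) xb * pmf (obsG q 1 xb) x"
    unfolding JJ_def by (rule pmf_bind_map_inj2[where g=Pair]) simp
  thus ?thesis by (simp add: pmf_obsG)
qed

lemma prod_shift1: "(\<Prod>k\<in>{1..<Suc m}. f k) = (\<Prod>t<m. f (Suc t) :: real)"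
  using prod.atLeast_Suc_lessThan_Suc_shift[of f 0 m] by (simp add: atLeast0LessThan)

lemma W_eq:
  assumes "n \<ge> 1" "length xb = n" "length x = n"
  shows "markov_mu p0 p xb * (\<Prod>l\<in>{1..n}. pmf (q l (xb ! (l - 1))) (x ! (l - 1)))
       = pmf (JJ p0 p q n) (xb, x)"
proof -
  obtain u r where xb: "xb = u # r" using assms by (cases xb) auto
  have m: "markov_mu p0 p xb = pmf p0 u * hw p 1 u r"
    unfolding markov_mu_def xb hw_prod
    by (simp add: prod.atLeast_Suc_lessThan_Suc_shift atLeast0LessThan del: prod.op_ivl_Suc)
  have "{1..n} = {1..<Suc n}" by auto
  hence o: "(\<Prod>l\<in>{1..n}. pmf (q l (xb ! (l - 1))) (x ! (l - 1))) = ow q 1 xb x"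
    using assms by (simp add: ow_prod prod.atLeast_Suc_lessThan_Suc_shift atLeast0LessThan del: prod.op_ivl_Suc)
  show ?thesis using assms unfolding m o by (simp add: pmf_JJ pmf_HH xb)
qed

lemma pmf_map_snd_nn:
  "ennreal (pmf (map_pmf snd J) x) = (\<integral>\<^sup>+xb. ennreal (pmf J (xb, x)) \<partial>count_space UNIV)"
proof -
  have "ennreal (pmf (map_pmf snd J) x) = emeasure (measure_pmf J) (snd -` {x})"
    by (simp add: pmf_map measure_pmf.emeasure_eq_measure)
  also have "\<dots> = (\<integral>\<^sup>+z. ennreal (pmf J z) \<partial>count_space (snd -` {x}))"
    by (simp add: nn_integral_pmf)
  also have "\<dots> = (\<integral>\<^sup>+xb. ennreal (pmf J (xb, x)) \<partial>count_space UNIV)"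
    by (rule nn_integral_bij_count_space[symmetric]) (auto simp: bij_betw_def inj_on_def)
  finally show ?thesis .
qed

lemma nn_restrict_zero:
  assumes "\<And>x. x \<notin> A \<Longrightarrow> f x = 0"
  shows "(\<integral>\<^sup>+x. f x \<partial>count_space A) = (\<integral>\<^sup>+x. f x \<partial>count_space UNIV)"
proof -
  have "(\<integral>\<^sup>+x. f x \<partial>count_space A) = (\<integral>\<^sup>+x. f x * indicator A x \<partial>count_space UNIV)"
    by (rule nn_integral_count_space_indicator) (simp add: NO_MATCH_def)
  also have "\<dots> = (\<integral>\<^sup>+x. f x \<partial>count_space UNIV)"
    using assms by (intro nn_integral_cong) (auto split: split_indicator)
  finally show ?thesis .
qed

lemma hmm_rho_eq:
  fixes p0 :: "'a pmf" and q :: "nat \<Rightarrow> 'a \<Rightarrow> 'b pmf"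
  assumes "n \<ge> 1"
  shows "hmm_rho n p0 p q = pmf (RR p0 p q n)"
proof
  fix x :: "'b list"
  show "hmm_rho n p0 p q x = pmf (RR p0 p q n) x"
  proof (cases "length x = n")
    case True
    let ?W = "\<lambda>xb. markov_mu p0 p xb * (\<Prod>l\<in>{1..n}. pmf (q l (xb ! (l - 1))) (x ! (l - 1)))"
    have "(\<integral>\<^sup>+xb. ennreal (?W xb) \<partial>count_space {xb. length xb = n})
        = (\<integral>\<^sup>+xb. ennreal (pmf (JJ p0 p q n) (xb, x)) \<partial>count_space {xb. length xb = n})"
      using True assms by (intro nn_integral_cong arg_cong[where f=ennreal] W_eq) auto
    also have "\<dots> = (\<integral>\<^sup>+xb. ennreal (pmf (JJ p0 p q n) (xb, x)) \<partial>count_space UNIV)"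
      using assms by (intro nn_restrict_zero) (simp add: pmf_JJ pmf_HH)
    also have "\<dots> = ennreal (pmf (RR p0 p q n) x)"
      unfolding RR_def by (rule pmf_map_snd_nn[symmetric])
    finally have eq: "(\<integral>\<^sup>+xb. ennreal (?W xb) \<partial>count_space {xb. length xb = n}) = ennreal (pmf (RR p0 p q n) x)" .
    have nn: "0 \<le> ?W xb" for xb
      unfolding markov_mu_def by (intro mult_nonneg_nonneg prod_nonneg) auto
    have "hmm_rho n p0 p q x = infsum ?W {xb. length xb = n}"
      using True by (simp add: hmm_rho_def)
    also have "\<dots> = enn2real (\<integral>\<^sup>+xb. ennreal (?W xb) \<partial>count_space {xb. length xb = n})"
      using eq nn by (intro infsum_eq_nn) auto
    also have "\<dots> = pmf (RR p0 p q n) x" using eq by simp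
    finally show ?thesis .
  next
    case False
    have "ennreal (pmf (RR p0 p q n) x) = (\<integral>\<^sup>+xb. ennreal (pmf (JJ p0 p q n) (xb, x)) \<partial>count_space UNIV)"
      unfolding RR_def by (rule pmf_map_snd_nn)
    also have "\<dots> = 0"
    proof -
      have "pmf (JJ p0 p q n) (xb, x) = 0" for xb
        using False assms by (auto simp: pmf_JJ pmf_HH ow_len)
      thus ?thesis by simp
    qed
    finally have "pmf (RR p0 p q n) x = 0" by simp
    thus ?thesis using False by (simp add: hmm_rho_def)
  qed
qed

lemma infsum_pmf: "infsum (pmf M) A = measure_pmf.prob M A"
proof -
  have e: "(\<integral>\<^sup>+x. ennreal (pmf M x) \<partial>count_space A) = ennreal (measure_pmf.prob M A)"
    by (simp add: nn_integral_pmf measure_pmf.emeasure_eq_measure)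
  show ?thesis by (subst infsum_eq_nn) (auto simp: e)
qed

lemma nn_partition:
  fixes f :: "'x \<Rightarrow> ennreal" and g :: "'x \<Rightarrow> 'k::countable"
  shows "(\<integral>\<^sup>+x. f x \<partial>count_space A) = (\<integral>\<^sup>+k. (\<integral>\<^sup>+x. f x \<partial>count_space {x\<in>A. g x = k}) \<partial>count_space UNIV)"
proof -
  have "(\<integral>\<^sup>+x. f x \<partial>count_space {x\<in>A. g x = k}) = (\<integral>\<^sup>+x. f x * indicator {g x} k \<partial>count_space A)" for k
  proof -
    have "(\<integral>\<^sup>+x. f x \<partial>count_space {x\<in>A. g x = k}) = (\<integral>\<^sup>+x. f x * indicator {x\<in>A. g x = k} x \<partial>count_space UNIV)"
      by (rule nn_integral_count_space_indicator) (simp add: NO_MATCH_def)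
    also have "\<dots> = (\<integral>\<^sup>+x. (f x * indicator {g x} k) * indicator A x \<partial>count_space UNIV)"
      by (intro nn_integral_cong) (auto split: split_indicator)
    also have "\<dots> = (\<integral>\<^sup>+x. f x * indicator {g x} k \<partial>count_space A)"
      by (rule nn_integral_count_space_indicator[symmetric]) (simp add: NO_MATCH_def)
    finally show ?thesis .
  qed
  hence "(\<integral>\<^sup>+k. (\<integral>\<^sup>+x. f x \<partial>count_space {x\<in>A. g x = k}) \<partial>count_space UNIV)
      = (\<integral>\<^sup>+k. (\<integral>\<^sup>+x. f x * indicator {g x} k \<partial>count_space A) \<partial>count_space UNIV)" by simp
  also have "\<dots> = (\<integral>\<^sup>+x. (\<integral>\<^sup>+k. f x * indicator {g x} k \<partial>count_space UNIV) \<partial>count_space A)"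
    by (rule nn_swapU[symmetric])
  also have "\<dots> = (\<integral>\<^sup>+x. f x \<partial>count_space A)"
    by (simp add: nn_integral_cmult_indicator)
  finally show ?thesis by simp
qed

lemma nn_list_split:
  fixes f :: "'c::countable list \<Rightarrow> ennreal"
  shows "(\<integral>\<^sup>+r. f r \<partial>count_space {r. length r = m1 + m2})
       = (\<integral>\<^sup>+r1. (\<integral>\<^sup>+r2. f (r1 @ r2) \<partial>count_space {r. length r = m2}) \<partial>count_space {r. length r = m1})"
proof -
  have inner: "(\<integral>\<^sup>+r. f r \<partial>count_space {r\<in>{r. length r = m1 + m2}. take m1 r = k})
     = (if length k = m1 then (\<integral>\<^sup>+r2. f (k @ r2) \<partial>count_space {r. length r = m2}) else 0)" for k
  proof (cases "length k = m1")
    case True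
    have "bij_betw (\<lambda>r2. k @ r2) {r. length r = m2} {r\<in>{r. length r = m1 + m2}. take m1 r = k}"
    proof (rule bij_betwI')
      fix r assume "r \<in> {r\<in>{r. length r = m1 + m2}. take m1 r = k}"
      hence tk: "take m1 r = k" and lr: "length r = m1 + m2" by auto
      have "r = k @ drop m1 r" using append_take_drop_id[of m1 r] tk by simp
      thus "\<exists>r2\<in>{r. length r = m2}. r = k @ r2" using lr by (intro bexI[of _ "drop m1 r"]) auto
    qed (use True in auto)
    hence "(\<integral>\<^sup>+r2. f (k @ r2) \<partial>count_space {r. length r = m2}) = (\<integral>\<^sup>+r. f r \<partial>count_space {r\<in>{r. length r = m1 + m2}. take m1 r = k})"
      by (rule nn_integral_bij_count_space)
    thus ?thesis using True by simp
  next
    case False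
    hence e: "{r\<in>{r. length r = m1 + m2}. take m1 r = k} = {}" by auto
    show ?thesis using False by (simp only: e) (simp add: nn_integral_count_space_finite)
  qed
  have "(\<integral>\<^sup>+r. f r \<partial>count_space {r. length r = m1 + m2})
      = (\<integral>\<^sup>+k. (\<integral>\<^sup>+r. f r \<partial>count_space {r\<in>{r. length r = m1 + m2}. take m1 r = k}) \<partial>count_space UNIV)"
    by (rule nn_partition)
  also have "\<dots> = (\<integral>\<^sup>+k. (if length k = m1 then (\<integral>\<^sup>+r2. f (k @ r2) \<partial>count_space {r. length r = m2}) else 0) \<partial>count_space UNIV)"
    by (intro nn_integral_cong inner)
  also have "\<dots> = (\<integral>\<^sup>+k. (if length k = m1 then (\<integral>\<^sup>+r2. f (k @ r2) \<partial>count_space {r. length r = m2}) else 0) \<partial>count_space {r. length r = m1})"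
    by (rule nn_restrict_zero[symmetric]) auto
  also have "\<dots> = (\<integral>\<^sup>+r1. (\<integral>\<^sup>+r2. f (r1 @ r2) \<partial>count_space {r. length r = m2}) \<partial>count_space {r. length r = m1})"
    by (intro nn_integral_cong) auto
  finally show ?thesis .
qed

lemma pmf_bind_genH_nn:
  "ennreal (pmf (bind_pmf (genH p k u m) F) z)
     = (\<integral>\<^sup>+r. ennreal (hw p k u r * pmf (F r) z) \<partial>count_space {r. length r = m})"
proof -
  have "ennreal (pmf (bind_pmf (genH p k u m) F) z)
      = (\<integral>\<^sup>+r. ennreal (pmf (genH p k u m) r * pmf (F r) z) \<partial>count_space UNIV)"
    by (simp add: ennreal_pmf_bind nn_integral_measure_pmf ennreal_mult')
  also have "\<dots> = (\<integral>\<^sup>+r. ennreal (pmf (genH p k u m) r * pmf (F r) z) \<partial>count_space {r. length r = m})"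
    by (rule nn_restrict_zero[symmetric]) (simp add: pmf_genH)
  also have "\<dots> = (\<integral>\<^sup>+r. ennreal (hw p k u r * pmf (F r) z) \<partial>count_space {r. length r = m})"
    by (intro nn_integral_cong) (simp add: pmf_genH)
  finally show ?thesis .
qed

lemma nn_ow_sum: "(\<integral>\<^sup>+cs. ennreal (ow q l xs cs) \<partial>count_space {cs. length cs = length xs}) = 1"
proof -
  have "(\<integral>\<^sup>+cs. ennreal (ow q l xs cs) \<partial>count_space {cs. length cs = length xs})
     = (\<integral>\<^sup>+cs. ennreal (pmf (obsG q l xs) cs) \<partial>count_space UNIV)"
    by (subst nn_restrict_zero) (auto simp: pmf_obsG ow_len)
  thus ?thesis by (simp add: nn_pmf_1)
qed

definition Bv :: "(nat \<Rightarrow> 'a \<Rightarrow> 'a pmf) \<Rightarrow> (nat \<Rightarrow> 'a \<Rightarrow> 'b pmf) \<Rightarrow> nat \<Rightarrow> nat \<Rightarrow> 'a \<Rightarrow> 'b list pmf" where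
  "Bv p q n b v = bind_pmf (genH p (Suc b) v (n - b - 1)) (\<lambda>r. obsG q (Suc b) (v # r))"

definition Phi :: "(nat \<Rightarrow> 'a \<Rightarrow> 'a pmf) \<Rightarrow> (nat \<Rightarrow> 'a \<Rightarrow> 'b pmf) \<Rightarrow> nat \<Rightarrow> nat \<Rightarrow> nat \<Rightarrow> 'a \<Rightarrow> 'b list pmf" where
  "Phi p q n a b u = bind_pmf (genH p (Suc a) u (b - a)) (\<lambda>r. Bv p q n b (last (u # r)))"

definition Lam :: "'a pmf \<Rightarrow> (nat \<Rightarrow> 'a \<Rightarrow> 'a pmf) \<Rightarrow> (nat \<Rightarrow> 'a \<Rightarrow> 'b pmf) \<Rightarrow> 'b list \<Rightarrow> 'b \<Rightarrow> 'a list \<Rightarrow> real" where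
  "Lam p0 p q y w l = pmf p0 (hd l) * hw p 1 (hd l) (tl l) * ow q 1 l (y @ [w])"

lemma Lam_nonneg: "0 \<le> Lam p0 p q y w l"
  unfolding Lam_def by (intro mult_nonneg_nonneg hw_nonneg ow_nonneg pmf_nonneg)

lemma S_bij:
  fixes y z :: "'b list" and w :: 'b
  assumes "a < b" "b < n" "length y = a" "length z = n - b"
  shows "bij_betw (\<lambda>mid. y @ [w] @ mid @ z) {mid. length mid = b - a - 1}
           {x. length x = n \<and> take a x = y \<and> x ! a = w \<and> drop b x = z}"
proof (rule bij_betwI')
  fix mid :: "'b list" assume "mid \<in> {mid. length mid = b - a - 1}"
  hence lm: "length mid = b - a - 1" by simp
  have "length (y @ [w] @ mid) = b" using assms lm by simp
  hence "drop b (y @ [w] @ mid @ z) = z" by (metis append.assoc append_eq_conv_conj)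
  thus "y @ [w] @ mid @ z \<in> {x. length x = n \<and> take a x = y \<and> x ! a = w \<and> drop b x = z}"
    using assms lm by (auto simp: nth_append)
next
  fix x :: "'b list" assume "x \<in> {x. length x = n \<and> take a x = y \<and> x ! a = w \<and> drop b x = z}"
  hence x: "length x = n" "take a x = y" "x ! a = w" "drop b x = z" by auto
  have 1: "take (Suc a) x = y @ [w]" using x assms by (simp add: take_Suc_conv_app_nth)
  have 2: "drop (b - a - 1) (drop (Suc a) x) = z" using x assms by (simp add: drop_drop)
  have "x = take (Suc a) x @ take (b - a - 1) (drop (Suc a) x) @ drop (b - a - 1) (drop (Suc a) x)"
    by (simp only: append_take_drop_id)
  hence "x = y @ [w] @ take (b - a - 1) (drop (Suc a) x) @ z" using 1 2 by simp
  moreover have "length (take (b - a - 1) (drop (Suc a) x)) = b - a - 1" using x assms by simp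
  ultimately show "\<exists>mid\<in>{mid. length mid = b - a - 1}. x = y @ [w] @ mid @ z" by blast
qed auto

lemma jj_split:
  assumes ab: "a < b" "b < n" and len: "length l = Suc a" "length m = b - a" "length r = n - b - 1"
    "length y = a" "length mid = b - a - 1"
  shows "pmf (JJ p0 p q n) (l @ m @ r, y @ [w] @ mid @ z)
     = Lam p0 p q y w l * (hw p (Suc a) (last l) m * ow q (Suc (Suc a)) (butlast m) mid)
       * (hw p (Suc b) (last m) r * ow q (Suc b) (last m # r) z)"
proof -
  obtain u l' where l: "l = u # l'" using len by (cases l) auto
  have mne: "m \<noteq> []" using len ab by auto
  have lenall: "length (l @ m @ r) = n" using len ab by simp
  have H: "pmf (HH p0 p n) (l @ m @ r) = pmf p0 u * hw p 1 u (l' @ m @ r)"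
    using lenall ab by (simp add: pmf_HH l)
  have hw1: "hw p 1 u (l' @ m @ r) = hw p 1 u l' * (hw p (Suc a) (last l) m * hw p (Suc b) (last m) r)"
  proof -
    have "hw p 1 u (l' @ (m @ r)) = hw p 1 u l' * hw p (1 + length l') (last (u # l')) (m @ r)"
      by (rule hw_append)
    also have "hw p (1 + length l') (last (u # l')) (m @ r)
        = hw p (Suc a) (last l) m * hw p (Suc a + length m) (last (last l # m)) r"
      using len l by (simp add: hw_append)
    also have "Suc a + length m = Suc b" using len ab by simp
    also have "last (last l # m) = last m" using mne by simp
    finally show ?thesis by simp
  qed
  have mr: "m @ r = butlast m @ (last m # r)" using mne by simp
  have ow1: "ow q 1 (l @ m @ r) (y @ [w] @ mid @ z)
      = ow q 1 l (y @ [w]) * (ow q (Suc (Suc a)) (butlast m) mid * ow q (Suc b) (last m # r) z)"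
  proof -
    have "ow q 1 (l @ (m @ r)) ((y @ [w]) @ (mid @ z)) = ow q 1 l (y @ [w]) * ow q (1 + length l) (m @ r) (mid @ z)"
      using len by (intro ow_append) simp
    also have "ow q (1 + length l) (m @ r) (mid @ z)
        = ow q (Suc (Suc a)) (butlast m) mid * ow q (Suc (Suc a) + length (butlast m)) (last m # r) z"
      unfolding mr using len by (simp add: ow_append)
    also have "Suc (Suc a) + length (butlast m) = Suc b" using len ab by simp
    finally show ?thesis by simp
  qed
  show ?thesis
    unfolding pmf_JJ H hw1 ow1 Lam_def using l by (simp add: mult_ac)
qed

lemma pmf_Bv_nn: "ennreal (pmf (Bv p q n b v) z)
   = (\<integral>\<^sup>+r. ennreal (hw p (Suc b) v r * ow q (Suc b) (v # r) z) \<partial>count_space {r. length r = n - b - 1})"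
  unfolding Bv_def pmf_bind_genH_nn by (simp only: pmf_obsG)

lemma nn_zero_on:
  assumes "\<And>x. x \<in> A \<Longrightarrow> f x = 0"
  shows "(\<integral>\<^sup>+x. f x \<partial>count_space A) = 0"
proof -
  have "(\<integral>\<^sup>+x. f x \<partial>count_space A) = (\<integral>\<^sup>+x. 0 \<partial>count_space A)"
    by (rule nn_integral_cong) (simp add: assms)
  thus ?thesis by simp
qed

lemma pmf_Bv_0:
  assumes "length z \<noteq> n - b" "b < n"
  shows "pmf (Bv p q n b v) z = 0"
proof -
  have "ennreal (pmf (Bv p q n b v) z) = 0"
    unfolding pmf_Bv_nn using assms by (intro nn_zero_on) (auto simp: ow_len)
  thus ?thesis by simp
qed

lemma pmf_Phi_nn:
  assumes "a < b"
  shows "ennreal (pmf (Phi p q n a b u) z)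
   = (\<integral>\<^sup>+m. ennreal (hw p (Suc a) u m) * ennreal (pmf (Bv p q n b (last m)) z) \<partial>count_space {m. length m = b - a})"
  unfolding Phi_def pmf_bind_genH_nn using assms
  by (intro nn_integral_cong) (auto simp: ennreal_mult' hw_nonneg)

lemma pmf_Phi_0:
  assumes "length z \<noteq> n - b" "b < n" "a < b"
  shows "pmf (Phi p q n a b u) z = 0"
proof -
  have "ennreal (pmf (Phi p q n a b u) z) = 0"
    unfolding pmf_Phi_nn[OF assms(3)] using assms by (intro nn_zero_on) (simp add: pmf_Bv_0)
  thus ?thesis by simp
qed

lemma decomp:
  fixes p0 :: "'a::countable pmf" and q :: "nat \<Rightarrow> 'a \<Rightarrow> 'b::countable pmf" and y z :: "'b list"
  assumes ab: "a < b" "b < n" and ly: "length y = a"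
  shows "ennreal (measure_pmf.prob (RR p0 p q n) {x. length x = n \<and> take a x = y \<and> x ! a = w \<and> drop b x = z})
       = (\<integral>\<^sup>+l. ennreal (Lam p0 p q y w l) * ennreal (pmf (Phi p q n a b (last l)) z) \<partial>count_space {l. length l = Suc a})"
proof (cases "length z = n - b")
  case False
  hence e: "{x. length x = n \<and> take a x = y \<and> x ! a = w \<and> drop b x = z} = {}" by auto
  show ?thesis unfolding e using False ab by (simp add: pmf_Phi_0)
next
  case True
  define S where "S = {x. length x = n \<and> take a x = y \<and> x ! a = w \<and> drop b x = z}"
  define G where "G xb = (\<integral>\<^sup>+x. ennreal (pmf (JJ p0 p q n) (xb, x)) \<partial>count_space S)" for xb
  have n1: "n \<ge> 1" using ab by simp
  have Gval: "G (l @ m @ r) = ennreal (Lam p0 p q y w l) * (ennreal (hw p (Suc a) (last l) m)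
       * ennreal (hw p (Suc b) (last m) r * ow q (Suc b) (last m # r) z))"
    if len: "length l = Suc a" "length m = b - a" "length r = n - b - 1" for l m r
  proof -
    define C where "C = ennreal (Lam p0 p q y w l) * (ennreal (hw p (Suc a) (last l) m)
       * ennreal (hw p (Suc b) (last m) r * ow q (Suc b) (last m # r) z))"
    have "G (l @ m @ r) = (\<integral>\<^sup>+mid. ennreal (pmf (JJ p0 p q n) (l @ m @ r, y @ [w] @ mid @ z)) \<partial>count_space {mid. length mid = b - a - 1})"
      unfolding G_def S_def by (rule nn_integral_bij_count_space[OF S_bij[OF ab ly True], symmetric])
    also have "\<dots> = (\<integral>\<^sup>+mid. ennreal (Lam p0 p q y w l * (hw p (Suc a) (last l) m * ow q (Suc (Suc a)) (butlast m) mid)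
       * (hw p (Suc b) (last m) r * ow q (Suc b) (last m # r) z)) \<partial>count_space {mid. length mid = b - a - 1})"
      by (intro nn_integral_cong arg_cong[where f=ennreal] jj_split) (use len ab ly in auto)
    also have "\<dots> = (\<integral>\<^sup>+mid. C * ennreal (ow q (Suc (Suc a)) (butlast m) mid) \<partial>count_space {mid. length mid = b - a - 1})"
      by (intro nn_integral_cong) (simp add: C_def ennreal_mult' hw_nonneg ow_nonneg Lam_nonneg mult_nonneg_nonneg mult_ac)
    also have "\<dots> = C * (\<integral>\<^sup>+mid. ennreal (ow q (Suc (Suc a)) (butlast m) mid) \<partial>count_space {mid. length mid = length (butlast m)})"
      using len by (simp add: nn_integral_cmult)
    also have "\<dots> = C" by (simp only: nn_ow_sum mult_1_right)
    finally show ?thesis unfolding C_def .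
  qed
  have Ln: "{xb::'a list. length xb = n} = {xb. length xb = Suc a + ((b - a) + (n - b - 1))}"
    using ab by auto
  have "ennreal (measure_pmf.prob (RR p0 p q n) S) = (\<integral>\<^sup>+x. ennreal (pmf (RR p0 p q n) x) \<partial>count_space S)"
    by (simp add: nn_integral_pmf measure_pmf.emeasure_eq_measure)
  also have "\<dots> = (\<integral>\<^sup>+x. \<integral>\<^sup>+xb. ennreal (pmf (JJ p0 p q n) (xb, x)) \<partial>count_space UNIV \<partial>count_space S)"
    unfolding RR_def by (intro nn_integral_cong pmf_map_snd_nn)
  also have "\<dots> = (\<integral>\<^sup>+xb. G xb \<partial>count_space UNIV)"
    unfolding G_def by (rule nn_swapU)
  also have "\<dots> = (\<integral>\<^sup>+xb. G xb \<partial>count_space {xb. length xb = n})"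
    using n1 by (intro nn_restrict_zero[symmetric]) (simp add: G_def pmf_JJ pmf_HH)
  also have "\<dots> = (\<integral>\<^sup>+l. \<integral>\<^sup>+mr. G (l @ mr) \<partial>count_space {xb. length xb = (b - a) + (n - b - 1)} \<partial>count_space {l. length l = Suc a})"
    unfolding Ln by (rule nn_list_split)
  also have "\<dots> = (\<integral>\<^sup>+l. \<integral>\<^sup>+m. \<integral>\<^sup>+r. G (l @ m @ r) \<partial>count_space {r. length r = n - b - 1} \<partial>count_space {m. length m = b - a} \<partial>count_space {l. length l = Suc a})"
    by (intro nn_integral_cong nn_list_split)
  also have "\<dots> = (\<integral>\<^sup>+l. \<integral>\<^sup>+m. \<integral>\<^sup>+r. ennreal (Lam p0 p q y w l) * (ennreal (hw p (Suc a) (last l) m)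
       * ennreal (hw p (Suc b) (last m) r * ow q (Suc b) (last m # r) z)) \<partial>count_space {r. length r = n - b - 1} \<partial>count_space {m. length m = b - a} \<partial>count_space {l. length l = Suc a})"
    by (intro nn_integral_cong) (simp add: Gval)
  also have "\<dots> = (\<integral>\<^sup>+l. ennreal (Lam p0 p q y w l) * (\<integral>\<^sup>+m. ennreal (hw p (Suc a) (last l) m)
       * ennreal (pmf (Bv p q n b (last m)) z) \<partial>count_space {m. length m = b - a}) \<partial>count_space {l. length l = Suc a})"
    by (simp add: nn_integral_cmult pmf_Bv_nn)
  also have "\<dots> = (\<integral>\<^sup>+l. ennreal (Lam p0 p q y w l) * ennreal (pmf (Phi p q n a b (last l)) z) \<partial>count_space {l. length l = Suc a})"
    using ab by (simp add: pmf_Phi_nn)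
  finally show ?thesis unfolding S_def .
qed

lemma Phi_chain: "Phi p q n a b u = bind_pmf (chainK p (Suc a) (b - a) u) (Bv p q n b)"
  by (simp add: Phi_def chainK_def bind_map_pmf o_def)

lemma csum:
  fixes p0 :: "'a::countable pmf" and q :: "nat \<Rightarrow> 'a \<Rightarrow> 'b::countable pmf" and y :: "'b list"
  assumes ab: "a < b" "b < n" and ly: "length y = a"
  shows "ennreal (measure_pmf.prob (RR p0 p q n) {x. length x = n \<and> take a x = y \<and> x ! a = w})
       = (\<integral>\<^sup>+l. ennreal (Lam p0 p q y w l) \<partial>count_space {l. length l = Suc a})"
proof -
  define Sw where "Sw = {x. length x = n \<and> take a x = y \<and> x ! a = w}"
  have setq: "{x\<in>Sw. drop b x = z} = {x. length x = n \<and> take a x = y \<and> x ! a = w \<and> drop b x = z}" for z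
    by (auto simp: Sw_def)
  have "ennreal (measure_pmf.prob (RR p0 p q n) Sw) = (\<integral>\<^sup>+x. ennreal (pmf (RR p0 p q n) x) \<partial>count_space Sw)"
    by (simp add: nn_integral_pmf measure_pmf.emeasure_eq_measure)
  also have "\<dots> = (\<integral>\<^sup>+z. (\<integral>\<^sup>+x. ennreal (pmf (RR p0 p q n) x) \<partial>count_space {x\<in>Sw. drop b x = z}) \<partial>count_space UNIV)"
    by (rule nn_partition)
  also have "\<dots> = (\<integral>\<^sup>+z. ennreal (measure_pmf.prob (RR p0 p q n) {x\<in>Sw. drop b x = z}) \<partial>count_space UNIV)"
    by (simp add: nn_integral_pmf measure_pmf.emeasure_eq_measure)
  also have "\<dots> = (\<integral>\<^sup>+z. (\<integral>\<^sup>+l. ennreal (Lam p0 p q y w l) * ennreal (pmf (Phi p q n a b (last l)) z) \<partial>count_space {l. length l = Suc a}) \<partial>count_space UNIV)"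
    unfolding setq by (intro nn_integral_cong decomp[OF ab ly])
  also have "\<dots> = (\<integral>\<^sup>+l. (\<integral>\<^sup>+z. ennreal (Lam p0 p q y w l) * ennreal (pmf (Phi p q n a b (last l)) z) \<partial>count_space UNIV) \<partial>count_space {l. length l = Suc a})"
    by (rule nn_swapU[symmetric])
  also have "\<dots> = (\<integral>\<^sup>+l. ennreal (Lam p0 p q y w l) \<partial>count_space {l. length l = Suc a})"
    by (simp add: nn_integral_cmult nn_pmf_1)
  finally show ?thesis unfolding Sw_def .
qed

lemma cond_law_pmf:
  fixes p0 :: "'a::countable pmf" and q :: "nat \<Rightarrow> 'a \<Rightarrow> 'b::countable pmf" and y :: "'b list"
  assumes ab: "a < b" "b < n" and ly: "length y = a"
    and cpos: "measure_pmf.prob (RR p0 p q n) {x. length x = n \<and> take a x = y \<and> x ! a = w} > 0"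
  shows "\<exists>Pi. \<forall>z. measure_pmf.prob (RR p0 p q n) {x. length x = n \<and> take a x = y \<and> x ! a = w \<and> drop b x = z}
          / measure_pmf.prob (RR p0 p q n) {x. length x = n \<and> take a x = y \<and> x ! a = w}
       = pmf (bind_pmf Pi (\<lambda>l. Phi p q n a b (last l))) z"
proof -
  define c where "c = measure_pmf.prob (RR p0 p q n) {x. length x = n \<and> take a x = y \<and> x ! a = w}"
  have c0: "c > 0" using cpos by (simp add: c_def)
  define f where "f l = (if length l = Suc a then Lam p0 p q y w l / c else 0)" for l
  have fnn: "0 \<le> f l" for l using c0 by (simp add: f_def Lam_nonneg)
  have fe: "ennreal (f l) = ennreal (1 / c) * (ennreal (Lam p0 p q y w l) * indicator {l. length l = Suc a} l)" for l
    using c0 by (auto simp: f_def ennreal_mult'[symmetric] Lam_nonneg split: split_indicator)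
  have cs: "(\<integral>\<^sup>+l. ennreal (Lam p0 p q y w l) \<partial>count_space {l. length l = Suc a}) = ennreal c"
    using csum[OF ab ly, of p0 p q w] by (simp add: c_def)
  have fsum: "(\<integral>\<^sup>+l. ennreal (f l) \<partial>count_space UNIV) = 1"
  proof -
    have "(\<integral>\<^sup>+l. ennreal (f l) \<partial>count_space UNIV)
        = ennreal (1 / c) * (\<integral>\<^sup>+l. ennreal (Lam p0 p q y w l) * indicator {l. length l = Suc a} l \<partial>count_space UNIV)"
      unfolding fe by (simp add: nn_integral_cmult)
    also have "(\<integral>\<^sup>+l. ennreal (Lam p0 p q y w l) * indicator {l. length l = Suc a} l \<partial>count_space UNIV)
        = ennreal c"
      using cs by (simp add: nn_integral_count_space_indicator)
    finally show ?thesis using c0 by (simp add: ennreal_mult'[symmetric])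
  qed
  define Pi where "Pi = embed_pmf f"
  have pPi: "pmf Pi l = f l" for l unfolding Pi_def by (rule pmf_embed_pmf[OF fnn fsum])
  show ?thesis
  proof (intro exI allI)
    fix z
    have "ennreal (pmf (bind_pmf Pi (\<lambda>l. Phi p q n a b (last l))) z)
        = (\<integral>\<^sup>+l. ennreal (f l) * ennreal (pmf (Phi p q n a b (last l)) z) \<partial>count_space UNIV)"
      by (simp add: ennreal_pmf_bind nn_integral_measure_pmf pPi)
    also have "\<dots> = ennreal (1 / c) * (\<integral>\<^sup>+l. (ennreal (Lam p0 p q y w l) * ennreal (pmf (Phi p q n a b (last l)) z)) * indicator {l. length l = Suc a} l \<partial>count_space UNIV)"
      unfolding fe by (subst nn_integral_cmult[symmetric]) (auto intro!: nn_integral_cong simp: mult_ac split: split_indicator)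
    also have "\<dots> = ennreal (1 / c) * ennreal (measure_pmf.prob (RR p0 p q n) {x. length x = n \<and> take a x = y \<and> x ! a = w \<and> drop b x = z})"
      by (simp add: decomp[OF ab ly] nn_integral_count_space_indicator)
    also have "\<dots> = ennreal (measure_pmf.prob (RR p0 p q n) {x. length x = n \<and> take a x = y \<and> x ! a = w \<and> drop b x = z} / c)"
      using c0 by (simp add: ennreal_mult'[symmetric])
    finally have "pmf (bind_pmf Pi (\<lambda>l. Phi p q n a b (last l))) z
        = measure_pmf.prob (RR p0 p q n) {x. length x = n \<and> take a x = y \<and> x ! a = w \<and> drop b x = z} / c"
      using c0 by (simp add: ennreal_inj)
    thus "measure_pmf.prob (RR p0 p q n) {x. length x = n \<and> take a x = y \<and> x ! a = w \<and> drop b x = z}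
          / measure_pmf.prob (RR p0 p q n) {x. length x = n \<and> take a x = y \<and> x ! a = w}
       = pmf (bind_pmf Pi (\<lambda>l. Phi p q n a b (last l))) z" by (simp add: c_def)
  qed
qed

theorem theorem1:
  fixes p0 :: "'a::countable pmf"
    and p :: "nat \<Rightarrow> 'a \<Rightarrow> 'a pmf"
    and q :: "nat \<Rightarrow> 'a \<Rightarrow> 'b::countable pmf"
    and n i j :: nat
    and y :: "'b list" and w w' :: 'b
  assumes "n \<ge> 2" and "1 \<le> i" and "i < j" and "j \<le> n"
    and "length y = i - 1"
    and "cond_event_prob (hmm_rho n p0 p q) n i y w > 0"
    and "cond_event_prob (hmm_rho n p0 p q) n i y w' > 0"
  shows "eta (hmm_rho n p0 p q) n i j y w w' \<le> (\<Prod>k\<in>{i..<j}. theta p k)"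
proof -
  define a b where "a = i - 1" and "b = j - 1"
  have ab: "a < b" "b < n" using assms by (auto simp: a_def b_def)
  have ly: "length y = a" using assms by (simp add: a_def)
  have rho: "hmm_rho n p0 p q = pmf (RR p0 p q n)" using assms by (intro hmm_rho_eq) auto
  define R where "R = RR p0 p q n"
  have cep: "cond_event_prob (hmm_rho n p0 p q) n i y v = measure_pmf.prob R {x. length x = n \<and> take a x = y \<and> x ! a = v}" for v
    unfolding cond_event_prob_def rho infsum_pmf a_def R_def ..
  have cl: "cond_law (hmm_rho n p0 p q) n i j y v = (\<lambda>z. measure_pmf.prob R {x. length x = n \<and> take a x = y \<and> x ! a = v \<and> drop b x = z}
          / measure_pmf.prob R {x. length x = n \<and> take a x = y \<and> x ! a = v})" for v
    unfolding cond_law_def[abs_def] cep[symmetric] unfolding rho infsum_pmf a_def b_def R_def ..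
  obtain Pi where Pi: "\<forall>z. measure_pmf.prob R {x. length x = n \<and> take a x = y \<and> x ! a = w \<and> drop b x = z}
          / measure_pmf.prob R {x. length x = n \<and> take a x = y \<and> x ! a = w}
       = pmf (bind_pmf Pi (\<lambda>l. Phi p q n a b (last l))) z"
    using cond_law_pmf[OF ab ly, of p0 p q w] assms(6) unfolding cep R_def by blast
  obtain Pi' where Pi': "\<forall>z. measure_pmf.prob R {x. length x = n \<and> take a x = y \<and> x ! a = w' \<and> drop b x = z}
          / measure_pmf.prob R {x. length x = n \<and> take a x = y \<and> x ! a = w'}
       = pmf (bind_pmf Pi' (\<lambda>l. Phi p q n a b (last l))) z"
    using cond_law_pmf[OF ab ly, of p0 p q w'] assms(7) unfolding cep R_def by blast
  have X: "bind_pmf P (\<lambda>l. Phi p q n a b (last l))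
      = bind_pmf (bind_pmf (map_pmf last P) (chainK p (Suc a) (b - a))) (Bv p q n b)" for P :: "'a list pmf"
    by (simp add: Phi_chain bind_assoc_pmf bind_map_pmf o_def)
  have "eta (hmm_rho n p0 p q) n i j y w w'
      = tv (pmf (bind_pmf Pi (\<lambda>l. Phi p q n a b (last l)))) (pmf (bind_pmf Pi' (\<lambda>l. Phi p q n a b (last l))))"
    unfolding eta_def cl using Pi Pi' by (simp add: fun_eq_iff)
  also have "\<dots> \<le> 1 * tv (pmf (bind_pmf (map_pmf last Pi) (chainK p (Suc a) (b - a))))
                          (pmf (bind_pmf (map_pmf last Pi') (chainK p (Suc a) (b - a))))"
    unfolding X by (intro tv_bind_contract tv_pmf_le1)
  also have "\<dots> \<le> (\<Prod>t<b - a. theta p (Suc a + t)) * tv (pmf (map_pmf last Pi)) (pmf (map_pmf last Pi'))"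
    unfolding mult_1 by (rule chain_contract)
  also have "\<dots> \<le> (\<Prod>t<b - a. theta p (Suc a + t)) * 1"
    by (intro mult_left_mono tv_pmf_le1 prod_nonneg theta_nonneg)
  also have "\<dots> = (\<Prod>k\<in>{i..<j}. theta p k)"
  proof -
    have sh: "(\<Prod>k\<in>{i..<j}. theta p k) = (\<Prod>t<j - i. theta p (i + t))"
      by (subst prod.atLeastLessThan_shift_0) (simp add: o_def atLeast0LessThan)
    have e1: "Suc a = i" and e2: "b - a = j - i" using assms by (auto simp: a_def b_def)
    show ?thesis unfolding e1 e2 sh by simp
  qed
  finally show ?thesis .
qed

end
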